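(* In the multiple-choice secretary problem with predictions with capacity $k$, run the Learned Kleinberg algorithm with any threshold $\theta\ge 0$. For every instance with $M=\emptyset$, the algorithm's output $S$ satisfies $v(S)\ge (1-2\epsilon)\,v(S^* )$; in particular the algorithm is $(1-2\epsilon)$-competitive on such instances.
   Context: Multiple-choice secretary problem with predictions (continuous-time model): there are $n$ candidates $N=\{1,\dots,n\}$, each with actual value $v(i)>0$ (unknown in advance) and predicted value $\hat v(i)\ge 0$ (known in advance), and a capacity $k$. Each candidate independently receives an arrival time uniform on $[0,1]$; candidates are revealed in increasing order of arrival time, revealing index and actual value, and the algorithm irrevocably decides upon arrival whether to hire; at most $k$ candidates may be hired. For $S\subseteq N$, $v(S)=\sum_{i\in S}v(i)$, $\hat v(S)=\sum_{i\in S}\hat v(i)$. $S^*$ is a set of at most $k$ candidates maximizing $v$, $\epsilon=\max_{i\in N}|1-\hat v(i)/v(i)|$, and $M=\{i\in N : |1-\hat v(i)/v(i)|>\theta\}$. Learned Kleinberg algorithm with capacity $k$ and threshold $\theta$: fix $\hat S\in\arg\max_{S\subseteq N,|S|\le k}\hat v(S)$ and set $S=\emptyset$. Process candidates in arrival order; upon arrival of $i$: if $|1-\hat v(i)/v(i)|>\theta$, hire $i$, let $k'=k-|S|-1$, apply Kleinberg's (2005) multiple-choice secretary algorithm with capacity $k'$ to the remaining candidates obtaining $T$, and output $S\cup\{i\}\cup T$; otherwise, if $i\in\hat S$, hire $i$ (add it to $S$) and output $S$ if $|S|=k$. If all candidates are processed, output $S$. *)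

theory Defs
  imports Main Complex_Main
begin

definition rel_err :: "('a \<Rightarrow> real) \<Rightarrow> ('a \<Rightarrow> real) \<Rightarrow> 'a \<Rightarrow> real" where
  "rel_err v vh i = \<bar>1 - vh i / v i\<bar>"

definition pred_eps :: "'a set \<Rightarrow> ('a \<Rightarrow> real) \<Rightarrow> ('a \<Rightarrow> real) \<Rightarrow> real" where
  "pred_eps N v vh = Max (rel_err v vh ` N)"

definition bad_set :: "'a set \<Rightarrow> ('a \<Rightarrow> real) \<Rightarrow> ('a \<Rightarrow> real) \<Rightarrow> real \<Rightarrow> 'a set" where
  "bad_set N v vh \<theta> = {i \<in> N. rel_err v vh i > \<theta>}"

definition is_opt_set :: "'a set \<Rightarrow> nat \<Rightarrow> ('a \<Rightarrow> real) \<Rightarrow> 'a set \<Rightarrow> bool" where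
  "is_opt_set N k w S \<longleftrightarrow> S \<subseteq> N \<and> card S \<le> k \<and>
     (\<forall>T. T \<subseteq> N \<longrightarrow> card T \<le> k \<longrightarrow> sum w T \<le> sum w S)"

text \<open>Learned Kleinberg algorithm, run on the remaining arrival sequence (candidates
  in increasing order of arrival time), with current hired set S.
  The subroutine kb models Kleinberg's (2005) multiple-choice secretary algorithm:
  kb k' rest is the set it hires with capacity k' when run on the remaining
  arrival sequence rest (for one fixed realisation of its internal randomness).
  Shat is the fixed predicted-optimal set.\<close>
fun learned_kleinberg ::
  "(nat \<Rightarrow> 'a list \<Rightarrow> 'a set) \<Rightarrow> ('a \<Rightarrow> real) \<Rightarrow> ('a \<Rightarrow> real) \<Rightarrow> nat \<Rightarrow> real \<Rightarrow> 'a set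
     \<Rightarrow> 'a list \<Rightarrow> 'a set \<Rightarrow> 'a set" where
  "learned_kleinberg kb v vh k \<theta> Shat [] S = S"
| "learned_kleinberg kb v vh k \<theta> Shat (i # rest) S =
     (if rel_err v vh i > \<theta> then S \<union> {i} \<union> kb (k - card S - 1) rest
      else if i \<in> Shat then
        (if card (insert i S) = k then insert i S
         else learned_kleinberg kb v vh k \<theta> Shat rest (insert i S))
      else learned_kleinberg kb v vh k \<theta> Shat rest S)"

end

theory Submission
  imports Defs
begin

lemma alg:
  assumes "finite Shat" "distinct l" "S \<inter> set l = {}" "\<forall>i\<in>set l. \<not> rel_err v vh i > \<theta>"
    "card (S \<union> (Shat \<inter> set l)) \<le> k" "finite S"
  shows "learned_kleinberg kb v vh k \<theta> Shat l S = S \<union> (Shat \<inter> set l)"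
  using assms
proof (induction l arbitrary: S)
  case Nil
  then show ?case by simp
next
  case (Cons i rest)
  show ?case
  proof (cases "i \<in> Shat")
    case True
    have eq: "S \<union> (Shat \<inter> set (i # rest)) = insert i S \<union> (Shat \<inter> set rest)"
      using True by auto
    show ?thesis
    proof (cases "card (insert i S) = k")
      case True2: True
      have fin: "finite (insert i S \<union> (Shat \<inter> set rest))" using Cons.prems by auto
      have "insert i S = insert i S \<union> (Shat \<inter> set rest)"
        using card_subset_eq[OF fin, of "insert i S"] Cons.prems(5) True2 eq
        by (metis Un_upper1 card_mono fin le_antisym)
      then show ?thesis using True True2 Cons.prems(4) eq by simp
    next
      case False
      have "learned_kleinberg kb v vh k \<theta> Shat rest (insert i S) = insert i S \<union> (Shat \<inter> set rest)"
        using Cons.IH[of "insert i S"] Cons.prems eq by auto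
      then show ?thesis using True False Cons.prems(4) eq by simp
    qed
  next
    case False
    have eq: "S \<union> (Shat \<inter> set (i # rest)) = S \<union> (Shat \<inter> set rest)"
      using False by auto
    have "learned_kleinberg kb v vh k \<theta> Shat rest S = S \<union> (Shat \<inter> set rest)"
      using Cons.IH[of S] Cons.prems eq by auto
    then show ?thesis using False Cons.prems(4) eq by simp
  qed
qed

theorem lemma1:
  fixes N :: "'a set" and v vh :: "'a \<Rightarrow> real" and k :: nat and \<theta> :: real
    and \<sigma> :: "'a list" and kb :: "nat \<Rightarrow> 'a list \<Rightarrow> 'a set"
    and Shat Sstar :: "'a set"
  assumes "finite N"
    and "\<forall>i\<in>N. v i > 0"
    and "\<forall>i\<in>N. vh i \<ge> 0"
    and "\<theta> \<ge> 0"
    and "distinct \<sigma>" and "set \<sigma> = N"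
    and "is_opt_set N k vh Shat"
    and "is_opt_set N k v Sstar"
    and "bad_set N v vh \<theta> = {}"
  shows "sum v (learned_kleinberg kb v vh k \<theta> Shat \<sigma> {})
           \<ge> (1 - 2 * pred_eps N v vh) * sum v Sstar"
proof -
  have sub: "Shat \<subseteq> N" "card Shat \<le> k" and hopt: "sum vh Sstar \<le> sum vh Shat"
    using assms(7,8) unfolding is_opt_set_def by auto
  have ssub: "Sstar \<subseteq> N" using assms(8) unfolding is_opt_set_def by auto
  have finS: "finite Shat" using sub assms(1) finite_subset by blast
  have res: "learned_kleinberg kb v vh k \<theta> Shat \<sigma> {} = Shat"
  proof -
    have "\<forall>i\<in>set \<sigma>. \<not> rel_err v vh i > \<theta>" using assms(9,6) unfolding bad_set_def by auto
    moreover have "Shat \<inter> set \<sigma> = Shat" using sub assms(6) by auto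
    ultimately show ?thesis using alg[OF finS assms(5), where S="{}" and v=v and vh=vh and \<theta>=\<theta> and k=k and kb=kb] sub by auto
  qed
  show ?thesis
  proof (cases "N = {}")
    case True
    then have "Sstar = {}" "Shat = {}" using ssub sub by auto
    then show ?thesis using res by simp
  next
    case False
    define e where "e = pred_eps N v vh"
    have eb: "\<forall>i\<in>N. rel_err v vh i \<le> e" unfolding e_def pred_eps_def
      using assms(1) False by auto
    have e0: "e \<ge> 0" using eb False unfolding rel_err_def by (meson abs_ge_zero all_not_in_conv order_trans)
    have up: "vh i \<le> (1 + e) * v i" if "i \<in> N" for i
    proof -
      have vp: "v i > 0" using assms(2) that by auto
      have "\<bar>1 - vh i / v i\<bar> \<le> e" using eb that unfolding rel_err_def by auto
      then have "vh i / v i \<le> 1 + e" by linarith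
      then show ?thesis using vp by (simp add: divide_le_eq algebra_simps)
    qed
    have lo: "(1 - e) * v i \<le> vh i" if "i \<in> N" for i
    proof -
      have vp: "v i > 0" using assms(2) that by auto
      have "\<bar>1 - vh i / v i\<bar> \<le> e" using eb that unfolding rel_err_def by auto
      then have "1 - e \<le> vh i / v i" by linarith
      then show ?thesis using vp by (simp add: le_divide_eq algebra_simps)
    qed
    have A: "sum vh Shat \<le> (1 + e) * sum v Shat"
      using up sub(1) by (auto simp: sum_distrib_left intro!: sum_mono)
    have B: "(1 - e) * sum v Sstar \<le> sum vh Sstar"
      using lo ssub by (auto simp: sum_distrib_left intro!: sum_mono)
    have vS: "sum v Sstar \<ge> 0" using assms(2) ssub by (meson less_imp_le subsetD sum_nonneg)
    have C: "(1 - 2*e) * (1 + e) * sum v Sstar \<le> (1 - e) * sum v Sstar"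
    proof -
      have "(1 - 2*e) * (1 + e) \<le> 1 - e" using e0 by (simp add: algebra_simps)
      then show ?thesis using vS by (simp add: mult_right_mono)
    qed
    have "(1 + e) * ((1 - 2*e) * sum v Sstar) \<le> (1 + e) * sum v Shat"
      using A B C hopt by (simp add: algebra_simps)
    then have "(1 - 2*e) * sum v Sstar \<le> sum v Shat" using e0
      by (simp add: mult_le_cancel_left_pos)
    then show ?thesis using res e_def by simp
  qed
qed

end
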